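(* Let $(e_i)_{i\in\mathbb Z}$ be i.i.d. $\mathcal N(0,1)$ random variables, $T$ a bimeasurable invertible measure-preserving map with $e_i\circ T=e_{i+1}$, $U g=g\circ T$, $\mathcal F_k=\sigma\{e_i:i\le k\}$, and $X_n=\sum_{i=0}^\infty a_ie_{n-i}$ with real $a_i$, $\sum a_i^2<\infty$. If $m\in L^2(\mathcal F_0)\ominus L^2(\mathcal F_{-1})$ satisfies $$\frac1{\sqrt n}\Big\|\sum_{i=0}^{n-1}(X_i-U^im)\Big\|_2\to0,$$ then $m=ce_0$ for some $c\in\mathbb R$.
   Context: $L^2(\mathcal F_0)\ominus L^2(\mathcal F_{-1})$ denotes the orthogonal complement of $L^2(\mathcal F_{-1})$ in $L^2(\mathcal F_0)$. *)

theory Defs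
  imports "HOL-Probability.Probability"
begin

definition measure_preserving :: "'a measure \<Rightarrow> ('a \<Rightarrow> 'a) \<Rightarrow> bool" where
  "measure_preserving M T \<longleftrightarrow> T \<in> M \<rightarrow>\<^sub>M M \<and> distr M M T = M"

definition nat_filtration :: "'a measure \<Rightarrow> (int \<Rightarrow> 'a \<Rightarrow> real) \<Rightarrow> int \<Rightarrow> 'a measure" where
  "nat_filtration M e k =
     sigma (space M) {e i -` A \<inter> space M | i A. i \<le> k \<and> A \<in> sets borel}"

definition L2norm :: "'a measure \<Rightarrow> ('a \<Rightarrow> real) \<Rightarrow> real" where
  "L2norm M f = sqrt (\<integral>x. (f x)\<^sup>2 \<partial>M)"

definition in_L2 :: "'a measure \<Rightarrow> 'a measure \<Rightarrow> ('a \<Rightarrow> real) \<Rightarrow> bool" where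
  "in_L2 M G f \<longleftrightarrow> f \<in> borel_measurable G \<and> integrable M (\<lambda>x. (f x)\<^sup>2)"

end

theory Submission
  imports Defs
begin


lemma L2_prod_integrable:
  fixes f g :: "'a \<Rightarrow> real"
  assumes "f \<in> borel_measurable M" "g \<in> borel_measurable M"
    "integrable M (\<lambda>x. (f x)\<^sup>2)" "integrable M (\<lambda>x. (g x)\<^sup>2)"
  shows "integrable M (\<lambda>x. f x * g x)"
proof -
  have i: "integrable M (\<lambda>x. (f x)\<^sup>2 + (g x)\<^sup>2)" using assms by auto
  have m: "(\<lambda>x. f x * g x) \<in> borel_measurable M" using assms by auto
  have "AE x in M. norm (f x * g x) \<le> norm ((f x)\<^sup>2 + (g x)\<^sup>2)"
  proof
    fix x
    have "0 \<le> (\<bar>f x\<bar> - \<bar>g x\<bar>)\<^sup>2" by simp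
    then have "2 * \<bar>f x * g x\<bar> \<le> (f x)\<^sup>2 + (g x)\<^sup>2"
      by (simp add: power2_eq_square algebra_simps abs_mult)
    then show "norm (f x * g x) \<le> norm ((f x)\<^sup>2 + (g x)\<^sup>2)" by simp
  qed
  from Bochner_Integration.integrable_bound[OF i m this] show ?thesis .
qed

lemma (in prob_space) L2_integrable:
  fixes f :: "'a \<Rightarrow> real"
  assumes "f \<in> borel_measurable M" "integrable M (\<lambda>x. (f x)\<^sup>2)"
  shows "integrable M f"
  using L2_prod_integrable[OF assms(1) borel_measurable_const assms(2), of 1] by simp

locale gset = prob_space M for M :: "'a measure" +
  fixes e :: "int \<Rightarrow> 'a \<Rightarrow> real"
  assumes indep: "indep_vars (\<lambda>_. borel) e UNIV"
    and gauss: "\<And>i. distributed M lborel (e i) std_normal_density"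
begin

lemma e_meas[measurable]: "e i \<in> borel_measurable M"
  using gauss[of i] by (auto simp: distributed_def)

lemma e_sq_int: "integrable M (\<lambda>x. (e i x)\<^sup>2)"
proof -
  have "integrable lborel (\<lambda>x. std_normal_density x * x ^ 2)"
    by (rule integrable_std_normal_moment)
  then show ?thesis
    using distributed_integrable[OF gauss[of i], of "\<lambda>x. x^2"] by simp
qed

lemma e_int: "integrable M (e i)"
  using L2_integrable[OF e_meas e_sq_int] .

lemma e_mean: "(\<integral>x. e i x \<partial>M) = 0"
  using standard_normal_distributed_expectation[OF gauss[of i]] by simp

lemma e_sq: "(\<integral>x. (e i x)\<^sup>2 \<partial>M) = 1"
  using standard_normal_distributed_variance[OF gauss[of i]] e_mean[of i] by simp

definition gen :: "int set \<Rightarrow> 'a set set" where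
  "gen I = (\<Union>i\<in>I. {e i -` A \<inter> space M | A. A \<in> sets borel})"

definition MI :: "int set \<Rightarrow> 'a measure" where
  "MI I = sigma (space M) (gen I)"

lemma gen_Pow: "gen I \<subseteq> Pow (space M)"
  by (auto simp: gen_def)

lemma space_MI[simp]: "space (MI I) = space M"
  by (simp add: MI_def gen_Pow)

lemma sets_MI: "sets (MI I) = sigma_sets (space M) (gen I)"
  by (simp add: MI_def gen_Pow)

lemma e_meas_MI[measurable]: "i \<in> I \<Longrightarrow> e i \<in> borel_measurable (MI I)"
  unfolding measurable_def
proof (intro CollectI conjI ballI)
  assume "i \<in> I"
  show "e i \<in> space (MI I) \<rightarrow> space borel" by simp
  fix A :: "real set" assume "A \<in> sets borel"
  then have "e i -` A \<inter> space M \<in> gen I" using \<open>i \<in> I\<close> by (auto simp: gen_def)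
  then show "e i -` A \<inter> space (MI I) \<in> sets (MI I)" by (simp add: sets_MI)
qed

lemma gen_sets: "gen I \<subseteq> sets M"
  using e_meas by (auto simp: gen_def)

lemma sets_MI_sub: "sets (MI I) \<subseteq> sets M"
  unfolding sets_MI using gen_sets
  by (metis sets.sigma_sets_subset)

lemma MI_meas_imp: "f \<in> borel_measurable (MI I) \<Longrightarrow> f \<in> borel_measurable M"
  using sets_MI_sub unfolding measurable_def by auto

lemma indep_MI:
  assumes "I \<inter> J = {}"
  shows "indep_set (sets (MI I)) (sets (MI J))"
proof -
  let ?E = "\<lambda>i. {e i -` A \<inter> space M | A. A \<in> sets borel}"
  let ?K = "case_bool I J"
  have ind: "indep_sets ?E UNIV" using indep unfolding indep_vars_def2 by auto
  have "indep_sets (\<lambda>j. sigma_sets (space M) (\<Union>i\<in>?K j. ?E i)) UNIV"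
  proof (rule indep_sets_collect_sigma)
    show "indep_sets ?E (\<Union>j\<in>UNIV. ?K j)"
      by (rule indep_sets_mono_index[OF _ ind]) auto
    show "Int_stable (?E i)" for i
      unfolding Int_stable_def
    proof (intro ballI)
      fix a b assume "a \<in> ?E i" "b \<in> ?E i"
      then obtain A B where "a = e i -` A \<inter> space M" "A \<in> sets borel"
        "b = e i -` B \<inter> space M" "B \<in> sets borel" by blast
      then show "a \<inter> b \<in> ?E i"
        by (intro CollectI exI[of _ "A \<inter> B"]) auto
    qed
    show "disjoint_family_on ?K UNIV"
      using assms by (auto simp: disjoint_family_on_def split: bool.split)
  qed
  moreover have "(\<lambda>j. sigma_sets (space M) (\<Union>i\<in>?K j. ?E i)) = case_bool (sets (MI I)) (sets (MI J))"
    by (rule ext) (simp add: sets_MI gen_def split: bool.split)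
  ultimately show ?thesis
    unfolding indep_set_def by simp
qed

lemma indep_integral:
  fixes f g :: "'a \<Rightarrow> real"
  assumes "I \<inter> J = {}" "f \<in> borel_measurable (MI I)" "g \<in> borel_measurable (MI J)"
    "integrable M f" "integrable M g"
  shows "(\<integral>x. f x * g x \<partial>M) = (\<integral>x. f x \<partial>M) * (\<integral>x. g x \<partial>M)"
proof (rule indep_var_lebesgue_integral[OF _ assms(4,5)])
  have fm: "f \<in> borel_measurable M" "g \<in> borel_measurable M"
    using assms MI_meas_imp by auto
  have s1: "sigma_sets (space M) {f -` A \<inter> space M | A. A \<in> sets borel} \<subseteq> sets (MI I)"
    using assms(2) unfolding measurable_def
    by (intro sigma_algebra.sigma_sets_subset[OF sets.sigma_algebra_axioms[of "MI I", simplified]]) auto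
  have s2: "sigma_sets (space M) {g -` A \<inter> space M | A. A \<in> sets borel} \<subseteq> sets (MI J)"
    using assms(3) unfolding measurable_def
    by (intro sigma_algebra.sigma_sets_subset[OF sets.sigma_algebra_axioms[of "MI J", simplified]]) auto
  show "indep_var borel f borel g"
    unfolding indep_var_eq using fm s1 s2 indep_MI[OF assms(1)]
    unfolding indep_set_def
    apply (intro conjI)
      apply simp
     apply simp
    apply (erule indep_sets_mono_sets)
    apply (simp split: bool.split)
    done
qed

end


definition sqi :: "'a measure \<Rightarrow> ('a \<Rightarrow> real) \<Rightarrow> bool" where
  "sqi M f \<longleftrightarrow> f \<in> borel_measurable M \<and> integrable M (\<lambda>x. (f x)\<^sup>2)"

lemma sqi_prod: "sqi M f \<Longrightarrow> sqi M g \<Longrightarrow> integrable M (\<lambda>x. f x * g x)"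
  unfolding sqi_def by (intro L2_prod_integrable) auto

lemma sqi_meas: "sqi M f \<Longrightarrow> f \<in> borel_measurable M"
  unfolding sqi_def by auto

lemma sqi_sq: "sqi M f \<Longrightarrow> integrable M (\<lambda>x. (f x)\<^sup>2)"
  unfolding sqi_def by auto

lemma sqi_add: "sqi M f \<Longrightarrow> sqi M g \<Longrightarrow> sqi M (\<lambda>x. f x + g x)"
proof -
  assume f: "sqi M f" and g: "sqi M g"
  have "integrable M (\<lambda>x. (f x)\<^sup>2 + 2 * (f x * g x) + (g x)\<^sup>2)"
    using sqi_prod[OF f g] sqi_sq[OF f] sqi_sq[OF g] by auto
  moreover have "(\<lambda>x. (f x)\<^sup>2 + 2 * (f x * g x) + (g x)\<^sup>2) = (\<lambda>x. (f x + g x)\<^sup>2)"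
    by (auto simp: power2_eq_square algebra_simps)
  ultimately show ?thesis using f g unfolding sqi_def by auto
qed

lemma sqi_cmult: "sqi M f \<Longrightarrow> sqi M (\<lambda>x. c * f x)"
  unfolding sqi_def by (auto simp: power_mult_distrib)

lemma sqi_minus: "sqi M f \<Longrightarrow> sqi M g \<Longrightarrow> sqi M (\<lambda>x. f x - g x)"
  using sqi_add[of M f "\<lambda>x. (-1) * g x"] sqi_cmult[of M g "-1"] by simp

lemma sqi_const: "finite_measure M \<Longrightarrow> sqi M (\<lambda>x. c)"
  unfolding sqi_def by (auto intro: finite_measure.integrable_const)

lemma sqi_sum: "finite I \<Longrightarrow> (\<And>i. i \<in> I \<Longrightarrow> sqi M (f i)) \<Longrightarrow> sqi M (\<lambda>x. \<Sum>i\<in>I. f i x)"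
proof (induction I rule: finite_induct)
  case empty then show ?case by (simp add: sqi_def)
next
  case (insert a I)
  then show ?case using sqi_add[of M "f a" "\<lambda>x. \<Sum>i\<in>I. f i x"] by simp
qed

lemma sqi_ind: "sqi M f \<Longrightarrow> A \<in> sets M \<Longrightarrow> sqi M (\<lambda>x. f x * indicator A x)"
proof -
  assume f: "sqi M f" and A: "A \<in> sets M"
  have "integrable M (\<lambda>x. indicator A x *\<^sub>R (f x)\<^sup>2)"
    using integrable_mult_indicator[OF A sqi_sq[OF f]] .
  moreover have "(\<lambda>x. indicator A x *\<^sub>R (f x)\<^sup>2) = (\<lambda>x. (f x * indicator A x)\<^sup>2)"
    by (auto simp: indicator_def)
  ultimately show ?thesis using f A unfolding sqi_def by auto
qed

lemma sqi_bound: "sqi M f \<Longrightarrow> g \<in> borel_measurable M \<Longrightarrow> (\<And>x. x \<in> space M \<Longrightarrow> \<bar>g x\<bar> \<le> \<bar>f x\<bar>) \<Longrightarrow> sqi M g"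
proof -
  assume f: "sqi M f" and g: "g \<in> borel_measurable M" and b: "\<And>x. x \<in> space M \<Longrightarrow> \<bar>g x\<bar> \<le> \<bar>f x\<bar>"
  have gm: "(\<lambda>x. (g x)\<^sup>2) \<in> borel_measurable M" using g by measurable
  have "AE x in M. norm ((g x)\<^sup>2) \<le> norm ((f x)\<^sup>2)"
    apply (rule AE_I2)
    using b by (simp add: abs_le_square_iff)
  then have "integrable M (\<lambda>x. (g x)\<^sup>2)"
    by (rule Bochner_Integration.integrable_bound[OF sqi_sq[OF f] gm])
  then show ?thesis using g by (simp add: sqi_def)
qed

context gset
begin

lemma sqi_e: "sqi M (e i)"
  using e_sq_int by (simp add: sqi_def)

lemma e_orth: "(\<integral>x. e k x * e l x \<partial>M) = (if k = l then 1 else 0)"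
proof (cases "k = l")
  case True then show ?thesis using e_sq[of k] by (simp add: power2_eq_square)
next
  case False
  have "(\<integral>x. e k x * e l x \<partial>M) = (\<integral>x. e k x \<partial>M) * (\<integral>x. e l x \<partial>M)"
    by (rule indep_integral[of "{k}" "{l}"]) (use False e_int in auto)
  then show ?thesis using False e_mean by simp
qed

lemma MI_mono: "I \<subseteq> J \<Longrightarrow> f \<in> borel_measurable (MI I) \<Longrightarrow> f \<in> borel_measurable (MI J)"
proof -
  assume IJ: "I \<subseteq> J" and f: "f \<in> borel_measurable (MI I)"
  have "sets (MI I) \<subseteq> sets (MI J)"
    unfolding sets_MI
    by (rule sigma_sets_subseteq) (use IJ in \<open>auto simp: gen_def\<close>)
  then show ?thesis using f unfolding measurable_def by auto
qed

lemma sum_e_MI: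
  assumes "\<And>j. j \<in> K \<Longrightarrow> \<phi> j \<in> I"
  shows "(\<lambda>x. \<Sum>j\<in>K. b j * e (\<phi> j) x) \<in> borel_measurable (MI I)"
  by (rule borel_measurable_sum) (use assms e_meas_MI in auto)

lemma sqi_sum_e: "sqi M (\<lambda>x. \<Sum>j\<in>K. b j * e (\<phi> j) x)" if "finite K"
  using that by (intro sqi_sum sqi_cmult sqi_e)

lemma sq_sum_e:
  assumes "inj_on \<phi> K" "finite K"
  shows "(\<integral>x. (\<Sum>j\<in>K. b j * e (\<phi> j) x)\<^sup>2 \<partial>M) = (\<Sum>j\<in>K. (b j)\<^sup>2)"
proof -
  have "(\<lambda>x. (\<Sum>j\<in>K. b j * e (\<phi> j) x)\<^sup>2) = (\<lambda>x. \<Sum>i\<in>K. \<Sum>j\<in>K. (b i * b j) * (e (\<phi> i) x * e (\<phi> j) x))"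
    by (auto simp: power2_eq_square sum_product algebra_simps)
  then have "(\<integral>x. (\<Sum>j\<in>K. b j * e (\<phi> j) x)\<^sup>2 \<partial>M) = (\<Sum>i\<in>K. \<Sum>j\<in>K. (b i * b j) * (\<integral>x. e (\<phi> i) x * e (\<phi> j) x \<partial>M))"
    using sqi_prod[OF sqi_e sqi_e]
    by (simp add: Bochner_Integration.integral_sum integrable_sum)
  also have "\<dots> = (\<Sum>i\<in>K. \<Sum>j\<in>K. (b i * b j) * (if i = j then 1 else 0))"
    using assms(1) by (intro sum.cong refl) (auto simp: e_orth inj_on_eq_iff)
  also have "\<dots> = (\<Sum>j\<in>K. (b j)\<^sup>2)"
    using assms(2) by (simp add: power2_eq_square if_distrib[of "\<lambda>x. _ * x"] sum.delta cong: if_cong)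
  finally show ?thesis .
qed

end


lemma sq_ind_eq: "(f * indicator A x)\<^sup>2 = f\<^sup>2 * (indicator A x :: real)"
  by (simp add: indicator_def)

context gset
begin

lemma kolm:
  fixes \<phi> :: "nat \<Rightarrow> int" and b :: "nat \<Rightarrow> real" and lam :: real
  assumes inj: "inj \<phi>" and lam: "0 < lam"
  shows "prob {x\<in>space M. \<exists>k\<le>n. lam \<le> \<bar>\<Sum>j<k. b j * e (\<phi> j) x\<bar>} \<le> (\<Sum>j<n. (b j)\<^sup>2) / lam\<^sup>2"
proof -
  define S where "S k x = (\<Sum>j<k. b j * e (\<phi> j) x)" for k x
  define A where "A k = {x\<in>space M. lam \<le> \<bar>S k x\<bar> \<and> (\<forall>j<k. \<bar>S j x\<bar> < lam)}" for k
  have SMI: "S j \<in> borel_measurable (MI (\<phi>`{..<k}))" if "j \<le> k" for j k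
    unfolding S_def by (rule sum_e_MI) (use that in auto)
  have SM[measurable]: "S k \<in> borel_measurable M" for k
    using SMI[of k k] MI_meas_imp by auto
  have sqiS: "sqi M (S k)" for k unfolding S_def by (rule sqi_sum_e) simp
  have AMI: "A k \<in> sets (MI (\<phi>`{..<k}))" for k
  proof -
    define S' where "S' j = S (min j k)" for j
    have [measurable]: "S' j \<in> borel_measurable (MI (\<phi>`{..<k}))" for j
      unfolding S'_def by (rule SMI) simp
    have "{x\<in>space (MI (\<phi>`{..<k})). lam \<le> \<bar>S' k x\<bar> \<and> (\<forall>j<k. \<bar>S' j x\<bar> < lam)} \<in> sets (MI (\<phi>`{..<k}))"
      by measurable
    moreover have "{x\<in>space (MI (\<phi>`{..<k})). lam \<le> \<bar>S' k x\<bar> \<and> (\<forall>j<k. \<bar>S' j x\<bar> < lam)} = A k"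
      unfolding A_def S'_def by auto
    ultimately show ?thesis by (simp only:)
  qed
  have AM[measurable]: "A k \<in> sets M" for k using AMI[of k] sets_MI_sub[of "\<phi>`{..<k}"] by blast
  define g where "g k x = S k x * indicator (A k) x" for k x
  have gMI: "g k \<in> borel_measurable (MI (\<phi>`{..<k}))" for k
    unfolding g_def using SMI[of k k] AMI[of k] by simp
  have sqig: "sqi M (g k)" for k unfolding g_def by (rule sqi_ind[OF sqiS AM])
  have cross: "(\<integral>x. g k x * e (\<phi> j) x \<partial>M) = 0" if "k \<le> j" for k j
  proof -
    have "(\<integral>x. g k x * e (\<phi> j) x \<partial>M) = (\<integral>x. g k x \<partial>M) * (\<integral>x. e (\<phi> j) x \<partial>M)"
      apply (rule indep_integral[of "\<phi>`{..<k}" "{\<phi> j}"])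
      using that inj gMI[of k] e_meas_MI[of "\<phi> j" "{\<phi> j}"] L2_integrable[OF sqi_meas[OF sqig] sqi_sq[OF sqig]] e_int
      by (auto simp: inj_eq)
    then show ?thesis using e_mean by simp
  qed
  have step1: "(\<integral>x. (S k x)\<^sup>2 * indicator (A k) x \<partial>M) \<le> (\<integral>x. (S n x)\<^sup>2 * indicator (A k) x \<partial>M)"
    if "k \<le> n" for k
  proof -
    define D where "D x = (\<Sum>j\<in>{k..<n}. b j * e (\<phi> j) x)" for x
    have sqiD: "sqi M D" unfolding D_def by (rule sqi_sum_e) simp
    have SnD: "S n x = S k x + D x" for x
      unfolding S_def D_def using that
      by (simp add: atLeast0LessThan[symmetric] sum.atLeastLessThan_concat)
    have eq: "(S n x)\<^sup>2 * indicator (A k) x = (S k x)\<^sup>2 * indicator (A k) x + 2 * (g k x * D x) + (D x * indicator (A k) x)\<^sup>2" for x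
      unfolding SnD g_def by (auto simp: indicator_def power2_eq_square algebra_simps)
    have i1: "integrable M (\<lambda>x. (S k x)\<^sup>2 * indicator (A k) x)"
      using sqi_sq[OF sqi_ind[OF sqiS AM, of k]] by (simp only: sq_ind_eq)
    have i2: "integrable M (\<lambda>x. g k x * D x)" by (rule sqi_prod[OF sqig sqiD])
    have i3: "integrable M (\<lambda>x. (D x * indicator (A k) x)\<^sup>2)"
      by (rule sqi_sq[OF sqi_ind[OF sqiD AM]])
    have gD: "(\<integral>x. g k x * D x \<partial>M) = 0"
    proof -
      have "(\<lambda>x. g k x * D x) = (\<lambda>x. \<Sum>j\<in>{k..<n}. b j * (g k x * e (\<phi> j) x))"
        unfolding D_def by (auto simp: sum_distrib_left algebra_simps)
      then have "(\<integral>x. g k x * D x \<partial>M) = (\<Sum>j\<in>{k..<n}. b j * (\<integral>x. g k x * e (\<phi> j) x \<partial>M))"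
        using sqi_prod[OF sqig sqi_e] by (simp add: Bochner_Integration.integral_sum integrable_sum)
      also have "\<dots> = 0" using cross by simp
      finally show ?thesis .
    qed
    have "(\<integral>x. (S n x)\<^sup>2 * indicator (A k) x \<partial>M) =
       (\<integral>x. (S k x)\<^sup>2 * indicator (A k) x \<partial>M) + 2 * (\<integral>x. g k x * D x \<partial>M) + (\<integral>x. (D x * indicator (A k) x)\<^sup>2 \<partial>M)"
      unfolding eq using i1 i2 i3 by simp
    moreover have "0 \<le> (\<integral>x. (D x * indicator (A k) x)\<^sup>2 \<partial>M)" by simp
    ultimately show ?thesis using gD by simp
  qed
  have step2: "lam\<^sup>2 * prob (A k) \<le> (\<integral>x. (S k x)\<^sup>2 * indicator (A k) x \<partial>M)" for k
  proof -
    have "lam\<^sup>2 * prob (A k) = (\<integral>x. lam\<^sup>2 * indicator (A k) x \<partial>M)" by simp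
    also have "\<dots> \<le> (\<integral>x. (S k x)\<^sup>2 * indicator (A k) x \<partial>M)"
    proof (rule integral_mono)
      show "integrable M (\<lambda>x. lam\<^sup>2 * indicator (A k) x)"
        by (intro integrable_mult_right integrable_real_indicator) (auto simp: emeasure_eq_measure)
      show "integrable M (\<lambda>x. (S k x)\<^sup>2 * indicator (A k) x)"
        using sqi_sq[OF sqi_ind[OF sqiS AM, of k]] by (simp only: sq_ind_eq)
      fix x assume "x \<in> space M"
      show "lam\<^sup>2 * indicator (A k) x \<le> (S k x)\<^sup>2 * indicator (A k) x"
      proof (cases "x \<in> A k")
        case True
        then have "lam \<le> \<bar>S k x\<bar>" unfolding A_def by auto
        then have "lam\<^sup>2 \<le> (S k x)\<^sup>2" using lam
          by (metis abs_ge_zero less_le power2_abs power_mono)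
        then show ?thesis using True by simp
      qed simp
    qed
    finally show ?thesis .
  qed
  have disj: "disjoint_family_on A {..n}"
    unfolding disjoint_family_on_def A_def
    by (auto, metis linorder_neqE_nat not_less)
  have step3: "prob {x\<in>space M. \<exists>k\<le>n. lam \<le> \<bar>S k x\<bar>} \<le> (\<Sum>k\<le>n. prob (A k))"
  proof -
    have "{x\<in>space M. \<exists>k\<le>n. lam \<le> \<bar>S k x\<bar>} \<subseteq> (\<Union>k\<in>{..n}. A k)"
    proof
      fix x assume x: "x \<in> {x\<in>space M. \<exists>k\<le>n. lam \<le> \<bar>S k x\<bar>}"
      then obtain k where k: "k \<le> n" "lam \<le> \<bar>S k x\<bar>" by auto
      define k0 where "k0 = (LEAST k. lam \<le> \<bar>S k x\<bar>)"
      have "lam \<le> \<bar>S k0 x\<bar>" unfolding k0_def by (rule LeastI[of _ k]) (rule k(2))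
      moreover have "k0 \<le> k" unfolding k0_def by (rule Least_le) (rule k(2))
      moreover have "\<forall>j<k0. \<bar>S j x\<bar> < lam" unfolding k0_def
        using not_less_Least by fastforce
      ultimately show "x \<in> (\<Union>k\<in>{..n}. A k)" using x k unfolding A_def by auto
    qed
    then have "prob {x\<in>space M. \<exists>k\<le>n. lam \<le> \<bar>S k x\<bar>} \<le> prob (\<Union>k\<in>{..n}. A k)"
      by (intro finite_measure_mono) auto
    also have "\<dots> \<le> (\<Sum>k\<le>n. prob (A k))"
      by (rule measure_UNION_le) auto
    finally show ?thesis .
  qed
  have step4: "(\<Sum>k\<le>n. (\<integral>x. (S n x)\<^sup>2 * indicator (A k) x \<partial>M)) \<le> (\<integral>x. (S n x)\<^sup>2 \<partial>M)"
  proof -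
    have "(\<Sum>k\<le>n. (\<integral>x. (S n x)\<^sup>2 * indicator (A k) x \<partial>M)) = (\<integral>x. (S n x)\<^sup>2 * indicator (\<Union>k\<in>{..n}. A k) x \<partial>M)"
    proof -
      have eq: "(\<lambda>x. (S n x)\<^sup>2 * indicator (\<Union>k\<in>{..n}. A k) x) = (\<lambda>x. \<Sum>k\<le>n. (S n x)\<^sup>2 * indicator (A k) x)"
        by (rule ext) (simp only: indicator_UN_disjoint[OF _ disj] sum_distrib_left finite_atMost)
      have int: "integrable M (\<lambda>x. (S n x)\<^sup>2 * indicator (A k) x)" for k
        using sqi_sq[OF sqi_ind[OF sqiS AM, of n k]] by (simp only: sq_ind_eq)
      have "(\<integral>x. (S n x)\<^sup>2 * indicator (\<Union>k\<in>{..n}. A k) x \<partial>M) = (\<integral>x. (\<Sum>k\<le>n. (S n x)\<^sup>2 * indicator (A k) x) \<partial>M)"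
        by (simp only: eq)
      also have "\<dots> = (\<Sum>k\<le>n. (\<integral>x. (S n x)\<^sup>2 * indicator (A k) x \<partial>M))"
        by (rule Bochner_Integration.integral_sum) (rule int)
      finally show ?thesis by (rule sym)
    qed
    also have "\<dots> \<le> (\<integral>x. (S n x)\<^sup>2 \<partial>M)"
    proof (rule integral_mono)
      show "integrable M (\<lambda>x. (S n x)\<^sup>2 * indicator (\<Union>k\<in>{..n}. A k) x)"
      proof -
        have U: "(\<Union>k\<in>{..n}. A k) \<in> sets M" by auto
        show ?thesis using sqi_sq[OF sqi_ind[OF sqiS[of n] U]] by (simp only: sq_ind_eq)
      qed
      show "integrable M (\<lambda>x. (S n x)\<^sup>2)" using sqi_sq[OF sqiS] .
    qed (auto simp: indicator_def)
    finally show ?thesis .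
  qed
  have step5: "(\<integral>x. (S n x)\<^sup>2 \<partial>M) = (\<Sum>j<n. (b j)\<^sup>2)"
    unfolding S_def by (rule sq_sum_e) (use inj in \<open>auto intro: inj_on_subset\<close>)
  have "lam\<^sup>2 * prob {x\<in>space M. \<exists>k\<le>n. lam \<le> \<bar>S k x\<bar>} \<le> lam\<^sup>2 * (\<Sum>k\<le>n. prob (A k))"
    using step3 by (simp add: mult_left_mono)
  also have "\<dots> = (\<Sum>k\<le>n. lam\<^sup>2 * prob (A k))" by (simp add: sum_distrib_left)
  also have "\<dots> \<le> (\<Sum>k\<le>n. (\<integral>x. (S n x)\<^sup>2 * indicator (A k) x \<partial>M))"
    by (rule sum_mono) (use step1 step2 in \<open>fastforce intro: order_trans\<close>)
  also have "\<dots> \<le> (\<Sum>j<n. (b j)\<^sup>2)" using step4 step5 by simp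
  finally have "lam\<^sup>2 * prob {x\<in>space M. \<exists>k\<le>n. lam \<le> \<bar>S k x\<bar>} \<le> (\<Sum>j<n. (b j)\<^sup>2)" .
  then show ?thesis unfolding S_def using lam by (simp add: field_simps)
qed

end


context gset
begin

lemma ae_small_tail:
  fixes \<phi> :: "nat \<Rightarrow> int" and b :: "nat \<Rightarrow> real" and eps :: real
  assumes inj: "inj \<phi>" and bs: "summable (\<lambda>j. (b j)\<^sup>2)" and eps: "0 < eps"
  shows "AE x in M. \<exists>M0. \<forall>k. \<bar>\<Sum>j<k. b (j + M0) * e (\<phi> (j + M0)) x\<bar> < eps"
proof -
  define E where "E M0 n = {x\<in>space M. \<exists>k\<le>n. eps \<le> \<bar>\<Sum>j<k. b (j + M0) * e (\<phi> (j + M0)) x\<bar>}" for M0 n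
  have Esets[measurable]: "E M0 n \<in> sets M" for M0 n unfolding E_def by measurable
  define t where "t M0 = (\<Sum>j. (b (j + M0))\<^sup>2)" for M0
  have tb: "prob (E M0 n) \<le> t M0 / eps\<^sup>2" for M0 n
  proof -
    have inj': "inj (\<lambda>j. \<phi> (j + M0))" using inj unfolding inj_def by (metis add_right_cancel)
    have "prob (E M0 n) \<le> (\<Sum>j<n. (b (j + M0))\<^sup>2) / eps\<^sup>2"
      unfolding E_def using kolm[OF inj' eps, where b="\<lambda>j. b (j + M0)" and n=n] by simp
    also have "\<dots> \<le> t M0 / eps\<^sup>2"
      unfolding t_def
      by (intro divide_right_mono sum_le_suminf summable_ignore_initial_segment[OF bs]) auto
    finally show ?thesis .
  qed
  define N where "N = (\<Inter>M0. \<Union>n. E M0 n)"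
  have Nsets: "N \<in> sets M" unfolding N_def by auto
  have Nle: "prob N \<le> t M0 / eps\<^sup>2" for M0
  proof -
    have inc: "incseq (E M0)" unfolding incseq_def E_def by (auto intro: le_trans)
    have lim: "(\<lambda>n. prob (E M0 n)) \<longlonglongrightarrow> prob (\<Union>n. E M0 n)"
      by (rule finite_Lim_measure_incseq) (auto simp: inc)
    have "prob (\<Union>n. E M0 n) \<le> t M0 / eps\<^sup>2"
      by (rule LIMSEQ_le_const2[OF lim]) (use tb in auto)
    moreover have "prob N \<le> prob (\<Union>n. E M0 n)"
      by (rule finite_measure_mono) (auto simp: N_def)
    ultimately show ?thesis by linarith
  qed
  have "prob N \<le> 0"
  proof (rule ccontr)
    assume "\<not> prob N \<le> 0"
    then have pos: "0 < prob N * eps\<^sup>2" using eps by simp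
    obtain M0 where "\<forall>n\<ge>M0. norm (\<Sum>i. (b (i + n))\<^sup>2) < prob N * eps\<^sup>2"
      using suminf_exist_split[OF pos bs] by blast
    then have "t M0 < prob N * eps\<^sup>2" unfolding t_def by auto
    then have "t M0 / eps\<^sup>2 < prob N" using eps by (simp add: field_simps)
    with Nle[of M0] show False by simp
  qed
  then have "prob N = 0" using measure_nonneg[of M N] by linarith
  then have Nnull: "N \<in> null_sets M"
    using Nsets by (simp add: null_sets_def emeasure_eq_measure)
  show ?thesis
  proof (rule AE_I'[OF Nnull])
    show "{x \<in> space M. \<not> (\<exists>M0. \<forall>k. \<bar>\<Sum>j<k. b (j + M0) * e (\<phi> (j + M0)) x\<bar> < eps)} \<subseteq> N"
      unfolding N_def E_def by (auto simp: not_less) blast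
  qed
qed

lemma ae_summable:
  fixes \<phi> :: "nat \<Rightarrow> int" and b :: "nat \<Rightarrow> real"
  assumes inj: "inj \<phi>" and bs: "summable (\<lambda>j. (b j)\<^sup>2)"
  shows "AE x in M. summable (\<lambda>j. b j * e (\<phi> j) x)"
proof -
  have "AE x in M. \<forall>p::nat. \<exists>M0. \<forall>k. \<bar>\<Sum>j<k. b (j + M0) * e (\<phi> (j + M0)) x\<bar> < 1 / Suc p"
    unfolding AE_all_countable by (intro allI ae_small_tail[OF inj bs]) simp
  then show ?thesis
  proof (rule AE_mp, intro AE_I2 impI)
    fix x
    define f where "f j = b j * e (\<phi> j) x" for j
    assume H: "\<forall>p::nat. \<exists>M0. \<forall>k. \<bar>\<Sum>j<k. b (j + M0) * e (\<phi> (j + M0)) x\<bar> < 1 / Suc p"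
    have "summable f"
      unfolding summable_Cauchy
    proof (intro allI impI)
      fix r :: real assume r: "0 < r"
      obtain p :: nat where p: "2 / r < real p" using reals_Archimedean2 by blast
      then have p2: "2 / Suc p < r" using r by (simp add: field_simps)
      obtain M0 where M0: "\<forall>k. \<bar>\<Sum>j<k. f (j + M0)\<bar> < 1 / Suc p"
        using H unfolding f_def by blast
      have Q: "\<bar>sum f {M0..<n}\<bar> < 1 / Suc p" if "M0 \<le> n" for n
      proof -
        have "sum f {M0..<n} = (\<Sum>j<n - M0. f (j + M0))"
          using that sum.shift_bounds_nat_ivl[of f 0 M0 "n - M0"] by (simp add: lessThan_atLeast0)
        then show ?thesis using M0 by simp
      qed
      show "\<exists>N. \<forall>m\<ge>N. \<forall>n. norm (sum f {m..<n}) < r"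
      proof (intro exI allI impI)
        fix m n assume m: "M0 \<le> m"
        show "norm (sum f {m..<n}) < r"
        proof (cases "m \<le> n")
          case True
          have "sum f {M0..<n} = sum f {M0..<m} + sum f {m..<n}"
            using True m by (simp add: sum.atLeastLessThan_concat)
          then have "\<bar>sum f {m..<n}\<bar> \<le> \<bar>sum f {M0..<n}\<bar> + \<bar>sum f {M0..<m}\<bar>" by linarith
          also have "\<dots> < 2 / Suc p" using Q[of n] Q[of m] True m by simp
          finally show ?thesis using p2 by simp
        next
          case False then show ?thesis using r by simp
        qed
      qed
    qed
    then show "summable (\<lambda>j. b j * e (\<phi> j) x)" unfolding f_def .
  qed
qed

end


lemma ineq_amgm: "0 < (t::real) \<Longrightarrow> \<bar>a * b\<bar> \<le> (t * a\<^sup>2 + b\<^sup>2 / t) / 2"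
proof -
  assume t: "0 < t"
  have "0 \<le> (t * \<bar>a\<bar> - \<bar>b\<bar>)\<^sup>2 / t" using t by simp
  also have "(t * \<bar>a\<bar> - \<bar>b\<bar>)\<^sup>2 / t = t * a\<^sup>2 + b\<^sup>2 / t - 2 * \<bar>a * b\<bar>"
    using t by (simp add: power2_eq_square field_simps abs_mult)
  finally show ?thesis by simp
qed

context gset
begin

lemma series_L2:
  fixes \<phi> :: "nat \<Rightarrow> int" and b :: "nat \<Rightarrow> real"
  assumes inj: "inj \<phi>" and bs: "summable (\<lambda>j. (b j)\<^sup>2)"
  defines "Z \<equiv> \<lambda>x. \<Sum>j. b j * e (\<phi> j) x"
  shows "integrable M (\<lambda>x. (Z x - (\<Sum>j<N. b j * e (\<phi> j) x))\<^sup>2)"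
    and "(\<integral>x. (Z x - (\<Sum>j<N. b j * e (\<phi> j) x))\<^sup>2 \<partial>M) \<le> (\<Sum>j. (b (j + N))\<^sup>2)"
proof -
  define S where "S n x = (\<Sum>j<n. b j * e (\<phi> j) x)" for n x
  have ZM[measurable]: "Z \<in> borel_measurable M" unfolding Z_def by measurable
  have SM[measurable]: "S n \<in> borel_measurable M" for n unfolding S_def by measurable
  define tN where "tN = (\<Sum>j. (b (j + N))\<^sup>2)"
  have tN0: "0 \<le> tN" unfolding tN_def
    by (intro suminf_nonneg summable_ignore_initial_segment[OF bs]) auto
  have AEconv: "AE x in M. (\<lambda>n. S n x) \<longlonglongrightarrow> Z x"
    using ae_summable[OF inj bs]
    by (rule AE_mp) (auto simp: S_def Z_def intro!: AE_I2 summable_LIMSEQ)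
  have bound_n: "(\<integral>\<^sup>+x. ennreal ((S n x - S N x)\<^sup>2) \<partial>M) \<le> ennreal tN" if "N \<le> n" for n
  proof -
    have eq: "S n x - S N x = (\<Sum>j\<in>{N..<n}. b j * e (\<phi> j) x)" for x
      unfolding S_def using that
      by (simp add: lessThan_atLeast0 sum.atLeastLessThan_concat[symmetric, of 0 N n])
    have int: "integrable M (\<lambda>x. (S n x - S N x)\<^sup>2)"
      unfolding eq by (rule sqi_sq[OF sqi_sum_e]) simp
    have "(\<integral>\<^sup>+x. ennreal ((S n x - S N x)\<^sup>2) \<partial>M) = ennreal (\<integral>x. (S n x - S N x)\<^sup>2 \<partial>M)"
      by (rule nn_integral_eq_integral[OF int]) simp
    also have "(\<integral>x. (S n x - S N x)\<^sup>2 \<partial>M) = (\<Sum>j\<in>{N..<n}. (b j)\<^sup>2)"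
      unfolding eq by (rule sq_sum_e) (use inj in \<open>auto intro: inj_on_subset\<close>)
    also have "\<dots> = (\<Sum>j<n - N. (b (j + N))\<^sup>2)"
      using that sum.shift_bounds_nat_ivl[of "\<lambda>j. (b j)\<^sup>2" 0 N "n - N"] by (simp add: lessThan_atLeast0)
    also have "\<dots> \<le> tN" unfolding tN_def
      by (intro sum_le_suminf summable_ignore_initial_segment[OF bs]) auto
    finally show ?thesis by (simp add: ennreal_leI)
  qed
  have fatou: "(\<integral>\<^sup>+x. ennreal ((Z x - S N x)\<^sup>2) \<partial>M) \<le> ennreal tN"
  proof -
    have "(\<integral>\<^sup>+x. ennreal ((Z x - S N x)\<^sup>2) \<partial>M) = (\<integral>\<^sup>+x. liminf (\<lambda>n. ennreal ((S n x - S N x)\<^sup>2)) \<partial>M)"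
    proof (rule nn_integral_cong_AE)
      show "AE x in M. ennreal ((Z x - S N x)\<^sup>2) = liminf (\<lambda>n. ennreal ((S n x - S N x)\<^sup>2))"
        using AEconv
      proof (rule AE_mp, intro AE_I2 impI)
        fix x assume "(\<lambda>n. S n x) \<longlonglongrightarrow> Z x"
        then have L: "(\<lambda>n. ennreal ((S n x - S N x)\<^sup>2)) \<longlonglongrightarrow> ennreal ((Z x - S N x)\<^sup>2)"
          by (intro tendsto_ennrealI tendsto_intros)
        show "ennreal ((Z x - S N x)\<^sup>2) = liminf (\<lambda>n. ennreal ((S n x - S N x)\<^sup>2))"
          using lim_imp_Liminf[OF _ L] by simp
      qed
    qed
    also have "\<dots> \<le> liminf (\<lambda>n. \<integral>\<^sup>+x. ennreal ((S n x - S N x)\<^sup>2) \<partial>M)"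
      by (rule nn_integral_liminf) simp
    also have "\<dots> \<le> ennreal tN"
      by (rule Liminf_le) (auto simp: eventually_sequentially intro!: exI[of _ N] bound_n)
    finally show ?thesis .
  qed
  show int: "integrable M (\<lambda>x. (Z x - (\<Sum>j<N. b j * e (\<phi> j) x))\<^sup>2)"
    unfolding S_def[symmetric]
  proof (rule integrableI_bounded)
    show "(\<lambda>x. (Z x - S N x)\<^sup>2) \<in> borel_measurable M" by simp
    have "(\<integral>\<^sup>+x. ennreal (norm ((Z x - S N x)\<^sup>2)) \<partial>M) = (\<integral>\<^sup>+x. ennreal ((Z x - S N x)\<^sup>2) \<partial>M)"
      by simp
    also have "\<dots> < \<infinity>" using fatou by (simp add: le_less_trans)
    finally show "(\<integral>\<^sup>+x. ennreal (norm ((Z x - S N x)\<^sup>2)) \<partial>M) < \<infinity>" .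
  qed
  have "ennreal (\<integral>x. (Z x - S N x)\<^sup>2 \<partial>M) = (\<integral>\<^sup>+x. ennreal ((Z x - S N x)\<^sup>2) \<partial>M)"
    by (rule nn_integral_eq_integral[symmetric]) (use int[unfolded S_def[symmetric]] in auto)
  then have "ennreal (\<integral>x. (Z x - S N x)\<^sup>2 \<partial>M) \<le> ennreal tN" using fatou by simp
  then show "(\<integral>x. (Z x - (\<Sum>j<N. b j * e (\<phi> j) x))\<^sup>2 \<partial>M) \<le> (\<Sum>j. (b (j + N))\<^sup>2)"
    using tN0 unfolding S_def[symmetric] tN_def[symmetric] by (simp add: ennreal_le_iff)
qed

lemma series_sqi:
  fixes \<phi> :: "nat \<Rightarrow> int" and b :: "nat \<Rightarrow> real"
  assumes inj: "inj \<phi>" and bs: "summable (\<lambda>j. (b j)\<^sup>2)"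
  shows "sqi M (\<lambda>x. \<Sum>j. b j * e (\<phi> j) x)"
  using series_L2(1)[OF inj bs, of 0] unfolding sqi_def by simp

lemma series_orth:
  fixes \<phi> :: "nat \<Rightarrow> int" and b :: "nat \<Rightarrow> real"
  assumes inj: "inj \<phi>" and bs: "summable (\<lambda>j. (b j)\<^sup>2)"
    and h: "sqi M h" and orth: "\<And>j. (\<integral>x. e (\<phi> j) x * h x \<partial>M) = 0"
  shows "(\<integral>x. (\<Sum>j. b j * e (\<phi> j) x) * h x \<partial>M) = 0"
proof -
  define Z where "Z x = (\<Sum>j. b j * e (\<phi> j) x)" for x
  define S where "S n x = (\<Sum>j<n. b j * e (\<phi> j) x)" for n x
  define H where "H = (\<integral>x. (h x)\<^sup>2 \<partial>M)"
  have H0: "0 \<le> H" unfolding H_def by simp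
  have sqiZ: "sqi M Z" unfolding Z_def by (rule series_sqi[OF inj bs])
  have sqiS: "sqi M (S n)" for n unfolding S_def by (rule sqi_sum_e) simp
  have key: "(\<integral>x. Z x * h x \<partial>M) = (\<integral>x. (Z x - S N x) * h x \<partial>M)" for N
  proof -
    have "(\<lambda>x. Z x * h x) = (\<lambda>x. (Z x - S N x) * h x + (\<Sum>j<N. b j * (e (\<phi> j) x * h x)))"
      unfolding S_def by (rule ext) (simp add: algebra_simps sum_distrib_left)
    then have "(\<integral>x. Z x * h x \<partial>M) = (\<integral>x. (Z x - S N x) * h x \<partial>M) + (\<Sum>j<N. b j * (\<integral>x. e (\<phi> j) x * h x \<partial>M))"
      using sqi_prod[OF sqi_minus[OF sqiZ sqiS] h] sqi_prod[OF sqi_e h]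
      by (simp add: Bochner_Integration.integral_sum integrable_sum)
    then show ?thesis using orth by simp
  qed
  have bnd: "\<bar>\<integral>x. Z x * h x \<partial>M\<bar> \<le> (t * (\<Sum>j. (b (j + N))\<^sup>2) + H / t) / 2" if t: "0 < t" for t N
  proof -
    have "\<bar>\<integral>x. Z x * h x \<partial>M\<bar> \<le> (\<integral>x. \<bar>(Z x - S N x) * h x\<bar> \<partial>M)"
      unfolding key[of N] by (rule integral_abs_bound)
    also have "\<dots> \<le> (\<integral>x. (t * (Z x - S N x)\<^sup>2 + (h x)\<^sup>2 / t) / 2 \<partial>M)"
    proof (rule integral_mono)
      show "integrable M (\<lambda>x. \<bar>(Z x - S N x) * h x\<bar>)"
        using sqi_prod[OF sqi_minus[OF sqiZ sqiS] h] by simp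
      show "integrable M (\<lambda>x. (t * (Z x - S N x)\<^sup>2 + (h x)\<^sup>2 / t) / 2)"
        using sqi_sq[OF sqi_minus[OF sqiZ sqiS]] sqi_sq[OF h] by simp
    qed (rule ineq_amgm[OF t])
    also have "\<dots> = (t * (\<integral>x. (Z x - S N x)\<^sup>2 \<partial>M) + H / t) / 2"
      using sqi_sq[OF sqi_minus[OF sqiZ sqiS]] sqi_sq[OF h] unfolding H_def by simp
    also have "\<dots> \<le> (t * (\<Sum>j. (b (j + N))\<^sup>2) + H / t) / 2"
      using series_L2(2)[OF inj bs, of N] t unfolding Z_def S_def by simp
    finally show ?thesis .
  qed
  have "\<bar>\<integral>x. Z x * h x \<partial>M\<bar> \<le> eps" if eps: "0 < eps" for eps
  proof -
    define t where "t = H / eps + 1"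
    have t: "0 < t" unfolding t_def using H0 eps by (simp add: add_nonneg_pos)
    have Ht: "H / t \<le> eps"
      using H0 eps unfolding t_def by (simp add: field_simps)
    have pos: "0 < eps / t" using eps t by simp
    obtain N where "\<forall>n\<ge>N. norm (\<Sum>i. (b (i + n))\<^sup>2) < eps / t"
      using suminf_exist_split[OF pos bs] by blast
    then have "(\<Sum>i. (b (i + N))\<^sup>2) < eps / t" by auto
    then have "t * (\<Sum>i. (b (i + N))\<^sup>2) \<le> eps" using t by (simp add: field_simps)
    then show ?thesis using bnd[OF t, of N] Ht by simp
  qed
  then have "\<bar>\<integral>x. Z x * h x \<partial>M\<bar> \<le> 0"
    by (metis dense not_le)
  then show ?thesis unfolding Z_def by simp
qed

end


lemma mp_meas: "measure_preserving M T \<Longrightarrow> T \<in> M \<rightarrow>\<^sub>M M"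
  by (simp add: measure_preserving_def)

lemma mp_funpow: "measure_preserving M T \<Longrightarrow> measure_preserving M (T ^^ n)"
proof (induction n)
  case 0
  then show ?case by (simp add: measure_preserving_def id_def)
next
  case (Suc n)
  have T: "T \<in> M \<rightarrow>\<^sub>M M" "distr M M T = M" using Suc.prems by (auto simp: measure_preserving_def)
  have Tn: "T ^^ n \<in> M \<rightarrow>\<^sub>M M" "distr M M (T ^^ n) = M" using Suc by (auto simp: measure_preserving_def)
  have "distr M M (T \<circ> T ^^ n) = distr (distr M M (T ^^ n)) M T"
    by (rule distr_distr[symmetric]) (use T Tn in auto)
  then show ?case using T Tn unfolding measure_preserving_def
    by (auto intro: measurable_comp)
qed

lemma mp_integral:
  fixes f :: "'a \<Rightarrow> real"
  assumes "measure_preserving M T" "f \<in> borel_measurable M"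
  shows "(\<integral>x. f (T x) \<partial>M) = (\<integral>x. f x \<partial>M)"
proof -
  have "(\<integral>x. f (T x) \<partial>M) = integral\<^sup>L (distr M M T) f"
    by (rule integral_distr[symmetric]) (use assms in \<open>auto simp: measure_preserving_def\<close>)
  then show ?thesis using assms by (simp add: measure_preserving_def)
qed

lemma mp_integrable:
  fixes f :: "'a \<Rightarrow> real"
  assumes "measure_preserving M T" "f \<in> borel_measurable M"
  shows "integrable M (\<lambda>x. f (T x)) \<longleftrightarrow> integrable M f"
proof -
  have "integrable (distr M M T) f \<longleftrightarrow> integrable M (\<lambda>x. f (T x))"
    by (rule integrable_distr_eq) (use assms in \<open>auto simp: measure_preserving_def\<close>)
  then show ?thesis using assms by (simp add: measure_preserving_def)
qed

lemma mp_sqi: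
  assumes "measure_preserving M T" "sqi M f"
  shows "sqi M (\<lambda>x. f (T x))"
proof -
  have T: "T \<in> M \<rightarrow>\<^sub>M M" using assms by (simp add: measure_preserving_def)
  have fm: "f \<in> borel_measurable M" using assms by (simp add: sqi_def)
  have "integrable M (\<lambda>x. (f (T x))\<^sup>2)"
    using mp_integrable[OF assms(1), of "\<lambda>x. (f x)\<^sup>2"] fm assms(2) by (simp add: sqi_def)
  moreover have "(\<lambda>x. f (T x)) \<in> borel_measurable M" using T fm by (rule measurable_compose)
  ultimately show ?thesis by (simp add: sqi_def)
qed

locale mset = gset +
  fixes T :: "'a \<Rightarrow> 'a" and a :: "nat \<Rightarrow> real" and m :: "'a \<Rightarrow> real" and X :: "int \<Rightarrow> 'a \<Rightarrow> real"
  assumes T_mp: "measure_preserving M T"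
    and T_bij: "bij_betw T (space M) (space M)"
    and Tinv_mp: "measure_preserving M (the_inv_into (space M) T)"
    and shift: "\<And>i x. x \<in> space M \<Longrightarrow> e i (T x) = e (i + 1) x"
    and a_sq: "summable (\<lambda>i. (a i)\<^sup>2)"
    and X_def: "\<And>n x. X n x = (\<Sum>i. a i * e (n - int i) x)"
    and m_L2: "in_L2 M (nat_filtration M e 0) m"
    and m_orth: "\<And>g. in_L2 M (nat_filtration M e (-1)) g \<Longrightarrow> (\<integral>x. m x * g x \<partial>M) = 0"
begin

definition "S = the_inv_into (space M) T"

lemma nf_eq: "nat_filtration M e k = MI {..k}"
  unfolding nat_filtration_def MI_def gen_def
  by (rule arg_cong[where f="sigma (space M)"]) auto

lemma T_space: "x \<in> space M \<Longrightarrow> T x \<in> space M"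
  using T_bij by (auto simp: bij_betw_def)

lemma S_space: "x \<in> space M \<Longrightarrow> S x \<in> space M"
  using bij_betw_the_inv_into[OF T_bij] unfolding S_def by (auto simp: bij_betw_def)

lemma TS: "x \<in> space M \<Longrightarrow> T (S x) = x"
  unfolding S_def by (rule f_the_inv_into_f_bij_betw[OF T_bij])

lemma S_mp: "measure_preserving M S"
  using Tinv_mp unfolding S_def .

lemma Tn_space: "x \<in> space M \<Longrightarrow> (T ^^ n) x \<in> space M"
  by (induction n) (auto simp: T_space)

lemma Sn_space: "x \<in> space M \<Longrightarrow> (S ^^ n) x \<in> space M"
  by (induction n) (auto simp: S_space)

lemma TnSn: "x \<in> space M \<Longrightarrow> (T ^^ n) ((S ^^ n) x) = x"
proof (induction n arbitrary: x)
  case (Suc n)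
  have "(T ^^ Suc n) ((S ^^ Suc n) x) = (T ^^ n) (T (S ((S ^^ n) x)))"
    by (simp add: funpow_swap1)
  also have "\<dots> = (T ^^ n) ((S ^^ n) x)" using Suc.prems by (simp add: TS Sn_space)
  also have "\<dots> = x" using Suc by simp
  finally show ?case .
qed simp

lemma shift_n: "x \<in> space M \<Longrightarrow> e k ((T ^^ n) x) = e (k + int n) x"
proof (induction n arbitrary: k)
  case (Suc n)
  have "e k ((T ^^ Suc n) x) = e k (T ((T ^^ n) x))" by simp
  also have "\<dots> = e (k + 1) ((T ^^ n) x)" using Suc.prems by (simp add: shift Tn_space)
  also have "\<dots> = e (k + int (Suc n)) x" using Suc by (simp add: algebra_simps)
  finally show ?case .
qed simp

lemma shift_S: "x \<in> space M \<Longrightarrow> e k (S x) = e (k - 1) x"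
  using shift[of "S x" "k - 1"] by (simp add: S_space TS)

lemma S_meas_MI: "S \<in> measurable (MI {..k}) (MI {..k + 1})"
  unfolding MI_def[of "{..k+1}"]
proof (rule measurable_measure_of)
  show "gen {..k + 1} \<subseteq> Pow (space M)" by (rule gen_Pow)
  show "S \<in> space (MI {..k}) \<rightarrow> space M" using S_space by auto
  fix y assume "y \<in> gen {..k + 1}"
  then obtain i A where y: "y = e i -` A \<inter> space M" "i \<le> k + 1" "A \<in> sets borel"
    by (auto simp: gen_def)
  have "S -` y \<inter> space (MI {..k}) = e (i - 1) -` A \<inter> space M"
    using y by (auto simp: shift_S S_space)
  also have "\<dots> \<in> gen {..k}" using y unfolding gen_def by force
  finally show "S -` y \<inter> space (MI {..k}) \<in> sets (MI {..k})"
    by (simp add: sets_MI)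
qed

lemma Sn_meas_MI: "S ^^ n \<in> measurable (MI {..k}) (MI {..k + int n})"
proof (induction n arbitrary: k)
  case 0
  then show ?case by (simp add: id_def)
next
  case (Suc n)
  have "S ^^ Suc n = (S ^^ n) \<circ> S" by (rule funpow_Suc_right)
  moreover have "S \<in> measurable (MI {..k}) (MI {..k + 1})" by (rule S_meas_MI)
  moreover have "S ^^ n \<in> measurable (MI {..k + 1}) (MI {..k + 1 + int n})"
    using Suc.IH[of "k+1"] .
  ultimately have "S ^^ Suc n \<in> measurable (MI {..k}) (MI {..k + 1 + int n})"
    by (auto intro: measurable_comp)
  moreover have eq: "k + int (Suc n) = k + 1 + int n" by simp
  ultimately show ?case by (simp only: eq)
qed

end


context mset
begin

lemma m_MI: "m \<in> borel_measurable (MI {..0})"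
  using m_L2 by (simp add: in_L2_def nf_eq)

lemma sqi_m: "sqi M m"
  using m_L2 m_MI MI_meas_imp by (simp add: in_L2_def sqi_def)

definition "c = (\<integral>x. m x * e 0 x \<partial>M)"
definition "r x = m x - c * e 0 x"

lemma r_MI: "r \<in> borel_measurable (MI {..0})"
  unfolding r_def using m_MI e_meas_MI[of 0 "{..0}"] by simp

lemma r_meas[measurable]: "r \<in> borel_measurable M"
  using r_MI MI_meas_imp by auto

lemma sqi_r: "sqi M r"
  unfolding r_def by (intro sqi_minus sqi_m sqi_cmult sqi_e)

lemma r_orth:
  assumes g: "g \<in> borel_measurable (MI {..-1})" "integrable M (\<lambda>x. (g x)\<^sup>2)"
  shows "(\<integral>x. r x * g x \<partial>M) = 0"
proof -
  have sqig: "sqi M g" using g MI_meas_imp by (simp add: sqi_def)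
  have "(\<integral>x. m x * g x \<partial>M) = 0"
    by (rule m_orth) (use g in \<open>simp add: in_L2_def nf_eq\<close>)
  moreover have "(\<integral>x. e 0 x * g x \<partial>M) = (\<integral>x. e 0 x \<partial>M) * (\<integral>x. g x \<partial>M)"
    by (rule indep_integral[of "{0}" "{..-1}"])
       (use g e_int L2_integrable[OF sqi_meas[OF sqig] sqi_sq[OF sqig]] in auto)
  moreover have "(\<integral>x. r x * g x \<partial>M) = (\<integral>x. m x * g x \<partial>M) - c * (\<integral>x. e 0 x * g x \<partial>M)"
  proof -
    have "(\<lambda>x. r x * g x) = (\<lambda>x. m x * g x - c * (e 0 x * g x))" by (auto simp: r_def algebra_simps)
    then show ?thesis using sqi_prod[OF sqi_m sqig] sqi_prod[OF sqi_e sqig]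
      by (simp add: Bochner_Integration.integral_diff)
  qed
  ultimately show ?thesis using e_mean by simp
qed

lemma r_e: "(\<integral>x. e l x * r x \<partial>M) = 0"
proof -
  have ee: "(\<integral>x. e l x * r x \<partial>M) = (\<integral>x. e l x * m x \<partial>M) - c * (\<integral>x. e l x * e 0 x \<partial>M)"
  proof -
    have "(\<lambda>x. e l x * r x) = (\<lambda>x. e l x * m x - c * (e l x * e 0 x))" by (auto simp: r_def algebra_simps)
    then show ?thesis using sqi_prod[OF sqi_e sqi_m] sqi_prod[OF sqi_e sqi_e]
      by (simp add: Bochner_Integration.integral_diff)
  qed
  consider "l \<le> -1" | "l = 0" | "l \<ge> 1" by linarith
  then show ?thesis
  proof cases
    case 1
    have "(\<integral>x. r x * e l x \<partial>M) = 0"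
      by (rule r_orth) (use 1 e_meas_MI[of l "{..-1}"] e_sq_int in auto)
    then show ?thesis by (simp add: mult.commute)
  next
    case 2
    then show ?thesis using ee e_orth[of 0 0] unfolding c_def by (simp add: mult.commute)
  next
    case 3
    have "(\<integral>x. e l x * m x \<partial>M) = (\<integral>x. e l x \<partial>M) * (\<integral>x. m x \<partial>M)"
      by (rule indep_integral[of "{l}" "{..0}"])
         (use 3 m_MI e_int L2_integrable[OF sqi_meas[OF sqi_m] sqi_sq[OF sqi_m]] in auto)
    then show ?thesis using ee e_orth[of l 0] 3 e_mean by simp
  qed
qed

lemma rT_e: "(\<integral>x. e k x * r ((T ^^ j) x) \<partial>M) = 0"
proof -
  have "(\<integral>x. e k x * r ((T ^^ j) x) \<partial>M) = (\<integral>x. e (k - int j) ((T ^^ j) x) * r ((T ^^ j) x) \<partial>M)"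
    by (rule Bochner_Integration.integral_cong) (auto simp: shift_n)
  also have "\<dots> = (\<integral>x. e (k - int j) x * r x \<partial>M)"
    by (rule mp_integral[OF mp_funpow[OF T_mp]]) simp
  also have "\<dots> = 0" by (rule r_e)
  finally show ?thesis .
qed

lemma sqi_rT: "sqi M (\<lambda>x. r ((T ^^ j) x))"
  by (rule mp_sqi[OF mp_funpow[OF T_mp] sqi_r])

lemma rr_shift: "d \<ge> 1 \<Longrightarrow> (\<integral>x. r x * r ((T ^^ d) x) \<partial>M) = 0"
proof -
  assume d: "d \<ge> 1"
  have Smp: "measure_preserving M (S ^^ d)" by (rule mp_funpow[OF S_mp])
  have "(\<integral>x. r x * r ((T ^^ d) x) \<partial>M) = (\<integral>x. r ((S ^^ d) x) * r ((T ^^ d) ((S ^^ d) x)) \<partial>M)"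
  proof (rule mp_integral[OF Smp, symmetric])
    show "(\<lambda>x. r x * r ((T ^^ d) x)) \<in> borel_measurable M"
      using sqi_meas[OF sqi_rT[of d]] by simp
  qed
  also have "\<dots> = (\<integral>x. r ((S ^^ d) x) * r x \<partial>M)"
    by (rule Bochner_Integration.integral_cong) (auto simp: TnSn)
  also have "\<dots> = (\<integral>x. r x * r ((S ^^ d) x) \<partial>M)" by (simp add: mult.commute)
  also have "\<dots> = 0"
  proof (rule r_orth)
    have "S ^^ d \<in> measurable (MI {..- int d}) (MI {..- int d + int d})" by (rule Sn_meas_MI)
    then have "(\<lambda>x. r ((S ^^ d) x)) \<in> borel_measurable (MI {..- int d})"
      using r_MI by (simp add: measurable_compose)
    then show "(\<lambda>x. r ((S ^^ d) x)) \<in> borel_measurable (MI {..-1})"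
      by (rule MI_mono[rotated]) (use d in auto)
    show "integrable M (\<lambda>x. (r ((S ^^ d) x))\<^sup>2)"
      using sqi_sq[OF mp_sqi[OF Smp sqi_r]] .
  qed
  finally show ?thesis .
qed

lemma rr: "(\<integral>x. r ((T ^^ i) x) * r ((T ^^ j) x) \<partial>M) = (if i = j then (\<integral>x. (r x)\<^sup>2 \<partial>M) else 0)"
proof -
  have gen: "(\<integral>x. r ((T ^^ i) x) * r ((T ^^ j) x) \<partial>M) = 0" if ij: "i < j" for i j
  proof -
    have "(\<integral>x. r ((T ^^ i) x) * r ((T ^^ j) x) \<partial>M) = (\<integral>x. r ((T ^^ i) x) * r ((T ^^ (j - i)) ((T ^^ i) x)) \<partial>M)"
    proof -
      have "T ^^ j = T ^^ (j - i) \<circ> T ^^ i" using ij by (simp add: funpow_add[symmetric])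
      then show ?thesis by simp
    qed
    also have "\<dots> = (\<integral>x. r x * r ((T ^^ (j - i)) x) \<partial>M)"
      by (rule mp_integral[OF mp_funpow[OF T_mp]]) (use sqi_meas[OF sqi_rT[of "j - i"]] in simp)
    also have "\<dots> = 0" by (rule rr_shift) (use ij in auto)
    finally show ?thesis .
  qed
  show ?thesis
  proof (cases "i = j")
    case True
    then show ?thesis
      using mp_integral[OF mp_funpow[OF T_mp], of "\<lambda>x. (r x)\<^sup>2" i] by (simp add: power2_eq_square)
  next
    case False
    then consider "i < j" | "j < i" by linarith
    then show ?thesis
      using gen[of i j] gen[of j i] False by cases (simp_all add: mult.commute)
  qed
qed

lemma X_eq: "X (int i) = (\<lambda>x. \<Sum>k. a k * e ((\<lambda>k. int i - int k) k) x)"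
  by (rule ext) (simp add: X_def)

lemma inj_phi: "inj (\<lambda>k::nat. int i - int k)"
  by (auto simp: inj_def)

lemma sqi_X: "sqi M (X (int i))"
  unfolding X_eq by (rule series_sqi[OF inj_phi a_sq])

lemma X_rT: "(\<integral>x. X (int i) x * r ((T ^^ j) x) \<partial>M) = 0"
  unfolding X_eq by (rule series_orth[OF inj_phi a_sq sqi_rT rT_e])

end


context mset
begin

lemma main:
  assumes lim: "(\<lambda>n. L2norm M (\<lambda>x. \<Sum>i<n. X (int i) x - m ((T ^^ i) x)) / sqrt (real n)) \<longlonglongrightarrow> 0"
  shows "\<exists>c::real. AE x in M. m x = c * e 0 x"
proof -
  define I where "I = (\<integral>x. (r x)\<^sup>2 \<partial>M)"
  have I0: "0 \<le> I" unfolding I_def by simp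
  define Zs where "Zs n x = (\<Sum>i<n. X (int i) x - c * e (int i) x)" for n x
  define R where "R n x = (\<Sum>i<n. r ((T ^^ i) x))" for n x
  have sqiZ: "sqi M (Zs n)" for n
    unfolding Zs_def by (intro sqi_sum sqi_minus sqi_X sqi_cmult sqi_e) simp
  have sqiR: "sqi M (R n)" for n
    unfolding R_def by (intro sqi_sum sqi_rT) simp
  have D_eq: "(\<Sum>i<n. X (int i) x - m ((T ^^ i) x)) = Zs n x - R n x" if x: "x \<in> space M" for n x
  proof -
    have "m ((T ^^ i) x) = r ((T ^^ i) x) + c * e (int i) x" for i
      using shift_n[OF x, of 0 i] by (simp add: r_def)
    then show ?thesis unfolding Zs_def R_def by (simp add: sum_subtractf sum.distrib algebra_simps)
  qed
  have cross: "(\<integral>x. Zs n x * R n x \<partial>M) = 0" for n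
  proof -
    have eq: "(\<lambda>x. Zs n x * R n x) = (\<lambda>x. \<Sum>i<n. \<Sum>j<n. X (int j) x * r ((T ^^ i) x) - c * (e (int j) x * r ((T ^^ i) x)))"
      unfolding Zs_def R_def by (rule ext) (simp add: sum_product algebra_simps)
    have "(\<integral>x. Zs n x * R n x \<partial>M) = (\<Sum>i<n. \<Sum>j<n. (\<integral>x. X (int j) x * r ((T ^^ i) x) \<partial>M) - c * (\<integral>x. e (int j) x * r ((T ^^ i) x) \<partial>M))"
      unfolding eq using sqi_prod[OF sqi_X sqi_rT] sqi_prod[OF sqi_e sqi_rT]
      by (simp add: Bochner_Integration.integral_sum integrable_sum Bochner_Integration.integral_diff)
    also have "\<dots> = 0" by (simp add: X_rT rT_e)
    finally show ?thesis .
  qed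
  have RR: "(\<integral>x. (R n x)\<^sup>2 \<partial>M) = real n * I" for n
  proof -
    have eq: "(\<lambda>x. (R n x)\<^sup>2) = (\<lambda>x. \<Sum>i<n. \<Sum>j<n. r ((T ^^ i) x) * r ((T ^^ j) x))"
      unfolding R_def by (rule ext) (simp add: power2_eq_square sum_product)
    have "(\<integral>x. (R n x)\<^sup>2 \<partial>M) = (\<Sum>i<n. \<Sum>j<n. (\<integral>x. r ((T ^^ i) x) * r ((T ^^ j) x) \<partial>M))"
      unfolding eq using sqi_prod[OF sqi_rT sqi_rT]
      by (simp add: Bochner_Integration.integral_sum integrable_sum)
    also have "\<dots> = (\<Sum>i<n. \<Sum>j<n. (if i = j then I else 0))"
      by (simp add: rr I_def)
    also have "\<dots> = real n * I" by (simp add: sum.delta)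
    finally show ?thesis .
  qed
  have Dint: "(\<integral>x. (\<Sum>i<n. X (int i) x - m ((T ^^ i) x))\<^sup>2 \<partial>M) \<ge> real n * I" for n
  proof -
    have "(\<integral>x. (\<Sum>i<n. X (int i) x - m ((T ^^ i) x))\<^sup>2 \<partial>M) = (\<integral>x. (Zs n x - R n x)\<^sup>2 \<partial>M)"
      by (rule Bochner_Integration.integral_cong) (auto simp: D_eq)
    also have "\<dots> = (\<integral>x. (Zs n x)\<^sup>2 \<partial>M) - 2 * (\<integral>x. Zs n x * R n x \<partial>M) + (\<integral>x. (R n x)\<^sup>2 \<partial>M)"
    proof -
      have "(\<lambda>x. (Zs n x - R n x)\<^sup>2) = (\<lambda>x. (Zs n x)\<^sup>2 - 2 * (Zs n x * R n x) + (R n x)\<^sup>2)"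
        by (rule ext) (simp add: power2_eq_square algebra_simps)
      then show ?thesis using sqi_sq[OF sqiZ] sqi_sq[OF sqiR] sqi_prod[OF sqiZ sqiR]
        by (simp add: Bochner_Integration.integral_diff)
    qed
    also have "\<dots> \<ge> real n * I" using cross RR by simp
    finally show ?thesis .
  qed
  have lower: "sqrt I \<le> L2norm M (\<lambda>x. \<Sum>i<n. X (int i) x - m ((T ^^ i) x)) / sqrt (real n)" if n: "n \<ge> 1" for n
  proof -
    have "sqrt (real n * I) \<le> L2norm M (\<lambda>x. \<Sum>i<n. X (int i) x - m ((T ^^ i) x))"
      unfolding L2norm_def using Dint[of n] by simp
    moreover have "sqrt (real n * I) = sqrt (real n) * sqrt I" by (simp add: real_sqrt_mult)
    moreover have "0 < sqrt (real n)" using n by simp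
    ultimately show ?thesis by (simp add: field_simps mult.commute)
  qed
  have "sqrt I \<le> 0"
    by (rule LIMSEQ_le_const[OF lim]) (use lower in auto)
  then have "I = 0" using I0 by simp
  then have "AE x in M. (r x)\<^sup>2 = 0"
    unfolding I_def using integral_nonneg_eq_0_iff_AE[OF sqi_sq[OF sqi_r]] by simp
  then have "AE x in M. m x = c * e 0 x"
    by (rule AE_mp) (auto simp: r_def intro!: AE_I2)
  then show ?thesis by blast
qed

end

theorem lemma1:
  fixes M :: "'a measure" and e :: "int \<Rightarrow> 'a \<Rightarrow> real" and T :: "'a \<Rightarrow> 'a"
    and a :: "nat \<Rightarrow> real" and m :: "'a \<Rightarrow> real" and X :: "int \<Rightarrow> 'a \<Rightarrow> real"
  assumes P: "prob_space M"
    and indep: "prob_space.indep_vars M (\<lambda>_. borel) e UNIV"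
    and gauss: "\<And>i. distributed M lborel (e i) std_normal_density"
    and T_mp: "measure_preserving M T"
    and T_bij: "bij_betw T (space M) (space M)"
    and Tinv_mp: "measure_preserving M (the_inv_into (space M) T)"
    and shift: "\<And>i x. x \<in> space M \<Longrightarrow> e i (T x) = e (i + 1) x"
    and a_sq: "summable (\<lambda>i. (a i)\<^sup>2)"
    and X_def: "\<And>n x. X n x = (\<Sum>i. a i * e (n - int i) x)"
    and m_L2: "in_L2 M (nat_filtration M e 0) m"
    and m_orth: "\<And>g. in_L2 M (nat_filtration M e (-1)) g \<Longrightarrow> (\<integral>x. m x * g x \<partial>M) = 0"
    and lim: "(\<lambda>n. L2norm M (\<lambda>x. \<Sum>i<n. X (int i) x - m ((T ^^ i) x)) / sqrt (real n))
               \<longlonglongrightarrow> 0"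
  shows "\<exists>c::real. AE x in M. m x = c * e 0 x"
proof -
  interpret mset M e T a m X
    by (rule mset.intro, rule gset.intro, fact P, unfold_locales) (fact assms)+
  show ?thesis by (rule main[OF lim])
qed


end
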